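(* Let $n,m,\ell$ be integers with $n-1\ge m\ge \ell\ge 0$. Then $$\mathcal Y_n\big(2^{\{m-\ell\}},1^{\{\ell\}}\big)+n\sum_{j=0}^{n-m-2}\mathcal Y_n\big(3^{\{m-\ell+1+j\}},2^{\{\ell-1-j\}},1^{\{n-m-2-j\}}\big)=\frac{1}{n(m+1)}\left(\binom{n-1}{m}+(-1)^m\binom{n-1}{2m+1}\right)\binom{n}{\ell}.$$
   Context: Let $\zeta_n=e^{2\pi\sqrt{-1}/n}$. For positive integers $s_1,\dots,s_m$, define $\mathfrak Z_n(s_1,\dots,s_m):=\sum_{1\le i_1<\cdots<i_m\le n-1}\prod_{k=1}^{m}(1-\zeta_n^{i_k})^{-s_k}$ (equal to $1$ if $m=0$ and to $0$ if $m>n-1$). Define $\mathcal Y_n(s_1,\dots,s_m):=\sum_{\sigma}\mathfrak Z_n(\sigma)$, where $\sigma$ runs over all distinct rearrangements of $(s_1,\dots,s_m)$; $\mathcal Y_n$ of the empty sequence is $1$. Notation: $a^{\{k\}}$ denotes the block $a,\dots,a$ of length $k$; any $\mathcal Y_n$ term in which some block has negative length is interpreted as $0$. Binomial coefficients $\binom{a}{b}$ are $0$ when $b<0$ or $b>a\ge0$. *)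

theory Defs
  imports Complex_Main "HOL-Combinatorics.Multiset_Permutations"
begin

definition zeta :: "nat \<Rightarrow> complex" where
  "zeta n = cis (2 * pi / real n)"

text \<open>Increasing index tuples are the sorted lists of m-element subsets of {1..n-1}.\<close>
definition frakZ :: "nat \<Rightarrow> nat list \<Rightarrow> complex" where
  "frakZ n s = (\<Sum>I\<in>{I. I \<subseteq> {1..n-1} \<and> card I = length s}.
      (\<Prod>k<length s. inverse ((1 - zeta n ^ (sorted_list_of_set I ! k)) ^ (s ! k))))"

definition calY :: "nat \<Rightarrow> nat list \<Rightarrow> complex" where
  "calY n s = (\<Sum>\<sigma>\<in>permutations_of_multiset (mset s). frakZ n \<sigma>)"

text \<open>calY applied to a concatenation of blocks a^{k}, given as pairs (a,k);
  the term is 0 if some block has negative length.\<close>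
definition calY_blocks :: "nat \<Rightarrow> (nat \<times> int) list \<Rightarrow> complex" where
  "calY_blocks n bs = (if \<exists>(a,k)\<in>set bs. k < 0 then 0
     else calY n (concat (map (\<lambda>(a,k). replicate (nat k) a) bs)))"

end

theory Submission
  imports Defs "HOL-Computational_Algebra.Fundamental_Theorem_Algebra"
begin

lemma zeta_pow: "zeta n ^ k = cis (2 * pi * real k / real n)"
  by (simp add: zeta_def DeMoivre mult_ac)

lemma zeta_pow_neq1:
  assumes "0 < k" "k < n" shows "zeta n ^ k \<noteq> 1"
proof
  assume h: "zeta n ^ k = 1"
  have n: "n > 0" using assms by simp
  have "inj_on (\<lambda>k. cis (2 * pi * real k / real n)) {..<n}"
    using bij_betw_roots_unity[OF n] by (simp add: bij_betw_def)
  moreover have "cis (2 * pi * real k / real n) = cis (2 * pi * real 0 / real n)"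
    using h by (simp add: zeta_pow)
  ultimately have "k = 0" using assms by (metis inj_onD lessThan_iff n)
  thus False using assms by simp
qed

lemma root_decomp:
  assumes n: "n > 0"
  shows "(\<Prod>k<n. [:-(zeta n ^ k), 1:]) = (monom 1 n - 1 :: complex poly)"
proof -
  define p :: "complex poly" where "p = monom 1 n - 1"
  have pz: "poly p z = 0 \<longleftrightarrow> z ^ n = 1" for z by (simp add: p_def poly_monom)
  have "pderiv p = monom (of_nat n) (n - 1)" by (simp add: p_def pderiv_diff pderiv_monom)
  have rs: "rsquarefree p"
    unfolding rsquarefree_roots
  proof (intro allI notI)
    fix a assume "poly p a = 0 \<and> poly (pderiv p) a = 0"
    hence "a ^ n = 1" "of_nat n * a ^ (n - 1) = 0"
      using pz \<open>pderiv p = _\<close> by (auto simp: poly_monom)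
    thus False using n by (cases "a = 0") (auto simp: power_0_left)
  qed
  have dp: "degree p = n" unfolding p_def using n
    using degree_add_eq_left[of "-1" "monom (1::complex) n"] by (simp add: degree_monom_eq)
  have lc: "lead_coeff p = 1" using dp n by (simp add: p_def)
  have "p = (\<Prod>z|poly p z = 0. [:-z, 1:])"
    using complex_poly_decompose_rsquarefree[OF rs] lc by simp
  also have "{z. poly p z = 0} = (\<lambda>k. zeta n ^ k) ` {..<n}"
    using bij_betw_roots_unity[OF n] pz by (auto simp: bij_betw_def zeta_pow)
  also have "(\<Prod>z\<in>(\<lambda>k. zeta n ^ k) ` {..<n}. [:-z, 1:]) = (\<Prod>k<n. [:-(zeta n ^ k), 1:])"
  proof -
    have e: "(\<lambda>k. zeta n ^ k) = (\<lambda>k. cis (2 * pi * real k / real n))"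
      by (simp add: fun_eq_iff zeta_pow)
    have "inj_on (\<lambda>k. zeta n ^ k) {..<n}"
      unfolding e using bij_betw_roots_unity[OF n] by (simp add: bij_betw_def)
    thus ?thesis by (subst prod.reindex) auto
  qed
  finally show ?thesis by (simp add: p_def)
qed

definition tt :: "nat \<Rightarrow> nat \<Rightarrow> complex" where
  "tt n i = inverse (1 - zeta n ^ i)"

definition esym :: "'a set \<Rightarrow> ('a \<Rightarrow> 'b::comm_ring_1) \<Rightarrow> nat \<Rightarrow> 'b" where
  "esym S c k = (\<Sum>A\<in>{A. A \<subseteq> S \<and> card A = k}. \<Prod>i\<in>A. c i)"

lemma prod_monom:
  assumes "finite A"
  shows "(\<Prod>i\<in>A. monom (c i) d) = monom (\<Prod>i\<in>A. c i) (d * card A)"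
  using assms by (induction A rule: finite_induct) (auto simp: mult_monom)

lemma coeff_prod_monom:
  fixes c :: "'a \<Rightarrow> 'b::comm_ring_1"
  assumes "finite S"
  shows "coeff (\<Prod>i\<in>S. monom (c i) d + 1) j = (\<Sum>A\<in>{A. A \<subseteq> S \<and> d * card A = j}. \<Prod>i\<in>A. c i)"
proof -
  have "(\<Prod>i\<in>S. monom (c i) d + 1) = (\<Sum>X\<in>Pow S. (\<Prod>i\<in>X. monom (c i) d) * (\<Prod>i\<in>S-X. 1))"
    by (rule prod_add[OF assms])
  also have "\<dots> = (\<Sum>X\<in>Pow S. monom (\<Prod>i\<in>X. c i) (d * card X))"
    using assms by (intro sum.cong refl) (auto simp: prod_monom finite_subset)
  finally have "coeff (\<Prod>i\<in>S. monom (c i) d + 1) j = (\<Sum>X\<in>Pow S. if d * card X = j then (\<Prod>i\<in>X. c i) else 0)"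
    by (simp add: coeff_sum coeff_monom)
  also have "\<dots> = (\<Sum>X\<in>{X\<in>Pow S. d * card X = j}. \<Prod>i\<in>X. c i)"
    using assms by (subst sum.inter_filter[symmetric]) auto
  finally show ?thesis by simp
qed

lemma coeff_prod_lin:
  fixes c :: "'a \<Rightarrow> 'b::comm_ring_1"
  assumes "finite S"
  shows "coeff (\<Prod>i\<in>S. monom (c i) 1 + 1) k = esym S c k"
  using coeff_prod_monom[OF assms, of c 1 k] by (simp add: esym_def)

lemma coeff_prod_quad:
  fixes c :: "'a \<Rightarrow> 'b::comm_ring_1"
  assumes "finite S"
  shows "coeff (\<Prod>i\<in>S. monom (c i) 2 + 1) (2 * k) = esym S c k"
  using coeff_prod_monom[OF assms, of c 2 "2*k"] by (simp add: esym_def)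

lemma esym_neg:
  fixes c :: "'a \<Rightarrow> 'b::comm_ring_1"
  shows "esym S (\<lambda>i. - c i) k = (-1) ^ k * esym S c k"
  unfolding esym_def sum_distrib_left
  by (intro sum.cong refl) (auto simp: prod_uminus)

lemma esym_const:
  fixes a :: "'b::comm_ring_1"
  assumes "finite S"
  shows "esym S (\<lambda>i. a) k = of_nat (card S choose k) * a ^ k"
  unfolding esym_def using n_subsets[OF assms, of k] by simp

lemma coeff_binom_poly:
  fixes b :: "'a::comm_ring_1"
  shows "coeff ([:1, b:] ^ n) i = of_nat (n choose i) * b ^ i"
proof (cases "i \<le> n")
  case True thus ?thesis using coeff_linear_poly_power[OF True, of 1 b] by simp
next
  case False
  have "degree ([:1, b:] ^ n) \<le> n"
    by (rule order.trans[OF degree_power_le]) (auto simp: degree_pCons_le)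
  hence "coeff ([:1, b:] ^ n) i = 0" using False by (intro coeff_eq_0) linarith
  thus ?thesis using False by (simp add: binomial_eq_0)
qed

lemma prod_S_lin:
  assumes n: "n > 0"
  shows "(\<Prod>i\<in>{1..n-1}. [:-(zeta n ^ i), 1:]) = (\<Sum>k<n. monom 1 k :: complex poly)"
proof -
  have "{..<n} = insert 0 {1..n-1}" using n by auto
  hence "[:-1, 1:] * (\<Prod>i\<in>{1..n-1}. [:-(zeta n ^ i), 1:]) = (monom 1 n - 1 :: complex poly)"
    using root_decomp[OF n] by simp
  also have "monom 1 n - 1 = [:-1, 1:] * (\<Sum>k<n. monom 1 k :: complex poly)"
    by (rule poly_eq_poly_eq_iff[THEN iffD1])
       (simp add: fun_eq_iff poly_monom poly_sum power_diff_1_eq algebra_simps)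
  finally show ?thesis by (subst (asm) mult_left_cancel) auto
qed

lemma prod_S_lin_pt:
  assumes n: "n > 0"
  shows "(\<Prod>i\<in>{1..n-1}. w - zeta n ^ i) = (\<Sum>k<n. w ^ k)"
proof -
  have "poly (\<Prod>i\<in>{1..n-1}. [:-(zeta n ^ i), 1:]) w = poly (\<Sum>k<n. monom 1 k :: complex poly) w"
    by (simp only: prod_S_lin[OF n])
  thus ?thesis by (simp add: poly_prod poly_sum poly_monom)
qed

lemma prod_one_minus_zeta:
  assumes n: "n > 0"
  shows "(\<Prod>i\<in>{1..n-1}. 1 - zeta n ^ i) = of_nat n"
  using prod_S_lin_pt[OF n, of 1] by simp

lemma prod_tt:
  assumes n: "n > 0"
  shows "(\<Prod>i\<in>{1..n-1}. tt n i) = 1 / of_nat n"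
  using prod_inversef[of "\<lambda>i. 1 - zeta n ^ i" "{1..n-1}"] prod_one_minus_zeta[OF n]
  by (simp add: tt_def o_def divide_inverse)

definition PP :: "nat \<Rightarrow> complex poly" where
  "PP n = (\<Prod>i\<in>{1..n-1}. monom (tt n i) 1 + 1)"

lemma poly_PP:
  assumes n: "n > 0"
  shows "of_nat n * x * poly (PP n) x = (1 + x) ^ n - 1"
proof -
  have nz: "1 - zeta n ^ i \<noteq> 0" if "i \<in> {1..n-1}" for i
  proof -
    have "0 < i" "i < n" using that n by auto
    thus ?thesis using zeta_pow_neq1[of i n] by auto
  qed
  have "poly (PP n) x = (\<Prod>i\<in>{1..n-1}. (1 + x - zeta n ^ i) / (1 - zeta n ^ i))"
    unfolding PP_def poly_prod
    by (intro prod.cong refl) (use nz in \<open>auto simp: poly_monom tt_def field_simps\<close>)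
  also have "\<dots> = (\<Sum>k<n. (1 + x) ^ k) / of_nat n"
    by (simp only: prod_dividef prod_S_lin_pt[OF n] prod_one_minus_zeta[OF n]) simp
  finally have "of_nat n * x * poly (PP n) x = x * (\<Sum>k<n. (1 + x) ^ k)"
    using n by simp
  also have "\<dots> = (1 + x) ^ n - 1" using power_diff_1_eq[of "1 + x" n] by simp
  finally show ?thesis .
qed

lemma PP_eq:
  assumes n: "n > 0"
  shows "smult (of_nat n) (pCons 0 (PP n)) = [:1, 1:] ^ n - 1"
proof (rule poly_eq_poly_eq_iff[THEN iffD1], rule ext)
  fix x
  show "poly (smult (of_nat n) (pCons 0 (PP n))) x = poly ([:1, 1:] ^ n - 1) x"
    using poly_PP[OF n, of x] by (simp add: ac_simps)
qed

lemma esym_tt: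
  assumes n: "n > 0"
  shows "of_nat n * esym {1..n-1} (tt n) k = of_nat (n choose (k + 1))"
proof -
  have "coeff (smult (of_nat n) (pCons 0 (PP n))) (Suc k) = coeff ([:1, 1:] ^ n - 1 :: complex poly) (Suc k)"
    by (simp only: PP_eq[OF n])
  moreover have "coeff (PP n) k = esym {1..n-1} (tt n) k"
    unfolding PP_def by (rule coeff_prod_lin) simp
  ultimately show ?thesis
    by (simp add: coeff_binom_poly)
qed

definition QQ :: "nat \<Rightarrow> complex poly" where
  "QQ n = (\<Prod>i\<in>{1..n-1}. monom (- (tt n i ^ 2)) 2 + 1)"

lemma poly_QQ:
  assumes n: "n > 0"
  shows "of_nat n ^ 2 * x ^ 2 * poly (QQ n) x = ((1 + x) ^ n - 1) * (1 - (1 - x) ^ n)"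
proof -
  have "poly (QQ n) x = poly (PP n) x * poly (PP n) (-x)"
    unfolding QQ_def PP_def poly_prod prod.distrib[symmetric]
    by (intro prod.cong refl) (simp add: poly_monom algebra_simps power2_eq_square)
  hence "of_nat n ^ 2 * x ^ 2 * poly (QQ n) x
        = (of_nat n * x * poly (PP n) x) * (- (of_nat n * (-x) * poly (PP n) (-x)))"
    by (simp add: power2_eq_square algebra_simps)
  also have "\<dots> = ((1 + x) ^ n - 1) * (1 - (1 - x) ^ n)"
    by (simp only: poly_PP[OF n]) simp
  finally show ?thesis .
qed

lemma QQ_eq:
  assumes n: "n > 0"
  shows "smult (of_nat n ^ 2) (monom 1 2 * QQ n)
       = [:1, 1:] ^ n + [:1, -1:] ^ n - 1 - (\<Prod>i<n. monom (-1) 2 + 1)"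
proof (rule poly_eq_poly_eq_iff[THEN iffD1], rule ext)
  fix x :: complex
  have "poly (smult (of_nat n ^ 2) (monom 1 2 * QQ n)) x = of_nat n ^ 2 * x ^ 2 * poly (QQ n) x"
    by (simp add: poly_monom)
  also have "\<dots> = ((1 + x) ^ n - 1) * (1 - (1 - x) ^ n)" by (rule poly_QQ[OF n])
  also have "\<dots> = (1 + x) ^ n + (1 - x) ^ n - 1 - (1 - x * x) ^ n"
  proof -
    have "(1 - x * x) ^ n = ((1 + x) * (1 - x)) ^ n"
      by (rule arg_cong[where f="\<lambda>y. y ^ n"]) (simp add: algebra_simps)
    thus ?thesis by (simp only: power_mult_distrib) (simp add: algebra_simps)
  qed
  also have "\<dots> = poly ([:1, 1:] ^ n + [:1, -1:] ^ n - 1 - (\<Prod>i<n. monom (-1) 2 + 1)) x"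
    by (simp add: poly_monom algebra_simps power2_eq_square)
  finally show "poly (smult (of_nat n ^ 2) (monom 1 2 * QQ n)) x = poly ([:1, 1:] ^ n + [:1, -1:] ^ n - 1 - (\<Prod>i<n. monom (-1) 2 + 1)) x" .
qed

lemma esym_tt2:
  assumes n: "n > 0"
  shows "of_nat n ^ 2 * esym {1..n-1} (\<lambda>i. tt n i ^ 2) m
       = of_nat (n choose (m + 1)) + 2 * (-1) ^ m * of_nat (n choose (2 * m + 2))"
proof -
  have "coeff (smult (of_nat n ^ 2) (monom 1 2 * QQ n)) (2 * (m + 1))
      = coeff ([:1, 1:] ^ n + [:1, -1:] ^ n - 1 - (\<Prod>i<n. monom (-1) 2 + 1) :: complex poly) (2 * (m + 1))"
    by (simp only: QQ_eq[OF n])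
  moreover have "coeff (QQ n) (2 * m) = esym {1..n-1} (\<lambda>i. - (tt n i ^ 2)) m"
    unfolding QQ_def by (rule coeff_prod_quad) simp
  moreover have "coeff (\<Prod>i<n. monom (-1) 2 + 1 :: complex poly) (2 * (m + 1)) = esym {..<n} (\<lambda>i. -1) (m + 1)"
    by (rule coeff_prod_quad) simp
  ultimately have "of_nat n ^ 2 * ((-1) ^ m * esym {1..n-1} (\<lambda>i. tt n i ^ 2) m)
      = 2 * of_nat (n choose (2 * m + 2)) - of_nat (n choose (m + 1)) * (-1) ^ (m + 1)"
    by (simp add: coeff_monom_mult coeff_binom_poly esym_neg esym_const power_mult_distrib)
  hence "(-1) ^ m * (of_nat n ^ 2 * ((-1) ^ m * esym {1..n-1} (\<lambda>i. tt n i ^ 2) m))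
      = (-1) ^ m * (2 * of_nat (n choose (2 * m + 2)) - of_nat (n choose (m + 1)) * (-1) ^ (m + 1))"
    by simp
  thus ?thesis by (simp add: algebra_simps power_add flip: power_mult_distrib)
qed

definition GG :: "nat set \<Rightarrow> nat multiset \<Rightarrow> (nat \<Rightarrow> nat) set" where
  "GG S M = {f. (\<forall>i. i \<notin> S \<longrightarrow> f i = 0) \<and> image_mset f (mset_set S) = M}"

definition wsum :: "nat set \<Rightarrow> (nat \<Rightarrow> complex) \<Rightarrow> nat multiset \<Rightarrow> complex" where
  "wsum S t M = (\<Sum>f\<in>GG S M. \<Prod>i\<in>S. t i ^ f i)"

lemma mset_sorted_set: "mset (sorted_list_of_set A) = mset_set A"
  by (metis mset_sorted_list_of_multiset sorted_list_of_mset_set)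

lemma img_split:
  assumes "finite S" "I \<subseteq> S" "\<forall>i\<in>S-I. f i = 0"
  shows "image_mset f (mset_set S) = image_mset f (mset_set I) + replicate_mset (card S - card I) 0"
proof -
  have fi: "finite I" using assms finite_subset by blast
  have "mset_set (I \<union> (S - I)) = mset_set I + mset_set (S - I)"
    by (rule mset_set_Union) (use assms fi in auto)
  moreover have "I \<union> (S - I) = S" using assms by auto
  ultimately have "mset_set S = mset_set I + mset_set (S - I)" by simp
  moreover have "image_mset f (mset_set (S - I)) = image_mset (\<lambda>_. 0) (mset_set (S - I))"
    using assms by (intro image_mset_cong) auto
  moreover have "card (S - I) = card S - card I" using assms fi by (simp add: card_Diff_subset)
  ultimately show ?thesis using assms by (simp add: image_mset_const_eq)
qed

lemma prod_supp:
  assumes "finite S" "\<forall>i. i \<notin> S \<longrightarrow> f i = 0"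
  defines "I \<equiv> {i\<in>S. f i \<noteq> 0}"
  shows "(\<Prod>k<length (map f (sorted_list_of_set I)). t (sorted_list_of_set I ! k) ^ (map f (sorted_list_of_set I) ! k))
       = (\<Prod>i\<in>S. t i ^ f i)"
proof -
  let ?L = "sorted_list_of_set I"
  have fi: "finite I" using assms by (simp add: I_def)
  have bij: "bij_betw ((!) ?L) {..<length ?L} I"
    by (rule bij_betw_nth) (use fi in auto)
  have "(\<Prod>k<length (map f ?L). t (?L ! k) ^ (map f ?L ! k)) = (\<Prod>k<length ?L. (\<lambda>i. t i ^ f i) (?L ! k))"
    by (intro prod.cong refl) auto
  also have "\<dots> = (\<Prod>i\<in>I. t i ^ f i)"
    by (rule prod.reindex_bij_betw[OF bij])
  also have "\<dots> = (\<Prod>i\<in>S. t i ^ f i)"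
    by (rule prod.mono_neutral_left) (use assms in \<open>auto simp: I_def\<close>)
  finally show ?thesis .
qed

lemma link:
  fixes t :: "nat \<Rightarrow> complex"
  assumes S: "finite S" and s0: "0 \<notin> set s"
  shows "(\<Sum>\<sigma>\<in>permutations_of_multiset (mset s). \<Sum>I\<in>{I. I \<subseteq> S \<and> card I = length \<sigma>}.
            \<Prod>k<length \<sigma>. t (sorted_list_of_set I ! k) ^ (\<sigma> ! k))
       = wsum S t (mset s + replicate_mset (card S - length s) 0)"
proof -
  define P where "P = permutations_of_multiset (mset s)"
  define K where "K = (\<lambda>\<sigma>::nat list. {I. I \<subseteq> S \<and> card I = length \<sigma>})"
  define M where "M = mset s + replicate_mset (card S - length s) 0"
  define h where "h = (\<lambda>(\<sigma>::nat list) I. \<Prod>k<length \<sigma>. t (sorted_list_of_set I ! k) ^ (\<sigma> ! k))"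
  define supp where "supp = (\<lambda>f::nat\<Rightarrow>nat. {i\<in>S. f i \<noteq> 0})"
  define \<psi> where "\<psi> = (\<lambda>f. (map f (sorted_list_of_set (supp f)), supp f))"
  have finK: "finite (K \<sigma>)" for \<sigma> unfolding K_def using S
    by (rule finite_subset[rotated, OF finite_Pow_iff[THEN iffD2]]) auto
  have sig: "(\<Sum>\<sigma>\<in>P. \<Sum>I\<in>K \<sigma>. h \<sigma> I) = (\<Sum>x\<in>Sigma P K. case_prod h x)"
    by (rule sum.Sigma) (auto simp: P_def finK)
  have G1: "image_mset f (mset_set (supp f)) = mset s" if f: "f \<in> GG S M" for f
  proof -
    have sub: "supp f \<subseteq> S" by (auto simp: supp_def)
    have "image_mset f (mset_set S) = image_mset f (mset_set (supp f)) + replicate_mset (card S - card (supp f)) 0"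
      by (rule img_split[OF S sub]) (auto simp: supp_def)
    hence eq: "image_mset f (mset_set (supp f)) + replicate_mset (card S - card (supp f)) 0 = mset s + replicate_mset (card S - length s) 0"
      using f by (simp add: GG_def M_def)
    have nz1: "count (image_mset f (mset_set (supp f))) 0 = 0"
      using S by (auto simp: supp_def count_eq_zero_iff)
    have nz2: "count (mset s) 0 = 0" using s0 by (simp add: count_eq_zero_iff)
    show ?thesis
    proof (rule multiset_eqI)
      fix x
      show "count (image_mset f (mset_set (supp f))) x = count (mset s) x"
      proof (cases "x = 0")
        case True thus ?thesis using nz1 nz2 by simp
      next
        case False
        have "count (image_mset f (mset_set (supp f)) + replicate_mset (card S - card (supp f)) 0) x
            = count (mset s + replicate_mset (card S - length s) 0) x" using eq by simp
        thus ?thesis using False by simp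
      qed
    qed
  qed
  have bij: "bij_betw \<psi> (GG S M) (Sigma P K)"
  proof (rule bij_betwI')
    fix f g assume f: "f \<in> GG S M" and g: "g \<in> GG S M"
    show "(\<psi> f = \<psi> g) = (f = g)"
    proof
      assume e: "\<psi> f = \<psi> g"
      hence su: "supp f = supp g" by (simp add: \<psi>_def)
      hence mm: "map f (sorted_list_of_set (supp f)) = map g (sorted_list_of_set (supp f))"
        using e by (simp add: \<psi>_def)
      have fin: "finite (supp f)" using S by (simp add: supp_def)
      show "f = g"
      proof
        fix i
        show "f i = g i"
        proof (cases "i \<in> supp f")
          case True
          thus ?thesis using mm fin by (simp add: map_eq_conv)
        next
          case False
          hence "i \<notin> supp g" using su by simp
          thus ?thesis using False f g by (auto simp: supp_def GG_def)
        qed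
      qed
    qed simp
  next
    fix f assume f: "f \<in> GG S M"
    have fin: "finite (supp f)" using S by (simp add: supp_def)
    have "mset (map f (sorted_list_of_set (supp f))) = mset s"
      using G1[OF f] by (simp add: mset_sorted_set)
    moreover have "card (supp f) = length (map f (sorted_list_of_set (supp f)))"
      using fin by simp
    ultimately show "\<psi> f \<in> Sigma P K"
      by (auto simp: \<psi>_def P_def K_def supp_def permutations_of_multiset_def)
  next
    fix y assume y: "y \<in> Sigma P K"
    obtain \<sigma> I where yy: "y = (\<sigma>, I)" and \<sigma>: "mset \<sigma> = mset s" and IS: "I \<subseteq> S" and cI: "card I = length \<sigma>"
      using y by (auto simp: P_def K_def permutations_of_multiset_def)
    have fI: "finite I" using IS S finite_subset by blast
    define L where "L = sorted_list_of_set I"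
    have lenL: "length L = length \<sigma>" using cI fI by (simp add: L_def)
    have bijL: "bij_betw ((!) L) {..<length L} I"
      by (rule bij_betw_nth) (use fI in \<open>auto simp: L_def\<close>)
    define f where "f = (\<lambda>i. if i \<in> I then \<sigma> ! (inv_into {..<length L} ((!) L) i) else 0)"
    have fL: "f (L ! k) = \<sigma> ! k" if "k < length L" for k
    proof -
      have "L ! k \<in> I" using bijL that by (auto simp: bij_betw_def)
      moreover have "inv_into {..<length L} ((!) L) (L ! k) = k"
        using bijL that by (intro inv_into_f_f) (auto simp: bij_betw_def)
      ultimately show ?thesis by (simp add: f_def)
    qed
    have set\<sigma>: "set \<sigma> = set s" using \<sigma> by (metis set_mset_mset)
    have fnz: "f i \<noteq> 0" if "i \<in> I" for i
    proof -
      have k: "inv_into {..<length L} ((!) L) i \<in> {..<length L}"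
        using bijL that by (metis bij_betw_def inv_into_into)
      hence "\<sigma> ! (inv_into {..<length L} ((!) L) i) \<in> set \<sigma>" using lenL by auto
      thus ?thesis using that s0 set\<sigma> by (auto simp: f_def) (metis gr0I)
    qed
    have suppf: "supp f = I" using IS fnz by (auto simp: supp_def f_def)
    have mapf: "map f L = \<sigma>"
      by (rule nth_equalityI) (auto simp: lenL fL)
    have fG: "f \<in> GG S M"
    proof -
      have "image_mset f (mset_set S) = image_mset f (mset_set I) + replicate_mset (card S - card I) 0"
        by (rule img_split[OF S IS]) (auto simp: f_def)
      also have "image_mset f (mset_set I) = mset s"
        using mapf \<sigma> by (metis L_def mset_map mset_sorted_set)
      finally show ?thesis using IS cI \<sigma>
        by (auto simp: GG_def M_def f_def size_mset[symmetric] simp del: size_mset)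
    qed
    have "\<psi> f = y" using suppf mapf by (simp add: \<psi>_def yy L_def)
    thus "\<exists>f\<in>GG S M. y = \<psi> f" using fG by blast
  qed
  have "(\<Sum>x\<in>Sigma P K. case_prod h x) = (\<Sum>f\<in>GG S M. case_prod h (\<psi> f))"
    by (rule sum.reindex_bij_betw[OF bij, symmetric])
  also have "\<dots> = wsum S t M"
    unfolding wsum_def
  proof (rule sum.cong[OF refl])
    fix f assume f: "f \<in> GG S M"
    hence "\<forall>i. i \<notin> S \<longrightarrow> f i = 0" by (simp add: GG_def)
    thus "case_prod h (\<psi> f) = (\<Prod>i\<in>S. t i ^ f i)"
      using prod_supp[OF S, of f t] by (simp add: h_def \<psi>_def supp_def)
  qed
  finally show ?thesis
    using sig by (simp add: P_def K_def h_def M_def)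
qed

lemma card_filter_sum:
  assumes "finite S"
  shows "card {i\<in>S. P i} = (\<Sum>i\<in>S. if P i then 1 else 0 :: nat)"
  using assms by (simp add: sum.inter_filter[symmetric])

lemma GG_count:
  assumes "finite S"
  shows "f \<in> GG S M \<longleftrightarrow> (\<forall>i. i \<notin> S \<longrightarrow> f i = 0) \<and> (\<forall>x. card {i\<in>S. f i = x} = count M x)"
  using assms by (auto simp: GG_def multiset_eq_iff count_image_mset_eq_card_vimage)

lemma counts4:
  assumes S: "finite S" and v: "\<forall>i\<in>S. f i \<le> (3::nat)"
  shows "card S = card {i\<in>S. f i = 0} + card {i\<in>S. f i = 1} + card {i\<in>S. f i = 2} + card {i\<in>S. f i = 3}"
    and "card {i\<in>S. odd (f i)} = card {i\<in>S. f i = 1} + card {i\<in>S. f i = 3}"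
    and "card {i\<in>S. 2 \<le> f i} = card {i\<in>S. f i = 2} + card {i\<in>S. f i = 3}"
proof -
  have e: "f i = 0 \<or> f i = 1 \<or> f i = 2 \<or> f i = 3" if "i \<in> S" for i
    using v that by (metis le_SucE le_zero_eq numeral_2_eq_2 numeral_3_eq_3 One_nat_def)
  have "card S = (\<Sum>i\<in>S. 1::nat)" by simp
  also have "\<dots> = (\<Sum>i\<in>S. (if f i = 0 then 1 else 0) + (if f i = 1 then 1 else 0) + (if f i = 2 then 1 else 0) + (if f i = 3 then 1 else 0))"
    by (intro sum.cong refl) (use e in force)
  finally show "card S = card {i\<in>S. f i = 0} + card {i\<in>S. f i = 1} + card {i\<in>S. f i = 2} + card {i\<in>S. f i = 3}"
    by (simp add: card_filter_sum[OF S] sum.distrib)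
  have "card {i\<in>S. odd (f i)} = (\<Sum>i\<in>S. (if f i = 1 then 1 else 0) + (if f i = 3 then 1 else 0))"
    unfolding card_filter_sum[OF S] by (intro sum.cong refl) (use e in force)
  thus "card {i\<in>S. odd (f i)} = card {i\<in>S. f i = 1} + card {i\<in>S. f i = 3}"
    by (simp add: card_filter_sum[OF S] sum.distrib)
  have "card {i\<in>S. 2 \<le> f i} = (\<Sum>i\<in>S. (if f i = 2 then 1 else 0) + (if f i = 3 then 1 else 0))"
    unfolding card_filter_sum[OF S] by (intro sum.cong refl) (use e in force)
  thus "card {i\<in>S. 2 \<le> f i} = card {i\<in>S. f i = 2} + card {i\<in>S. f i = 3}"
    by (simp add: card_filter_sum[OF S] sum.distrib)
qed

definition HH :: "nat set \<Rightarrow> nat \<Rightarrow> nat \<Rightarrow> (nat \<Rightarrow> nat) set" where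
  "HH S p m = {f. (\<forall>i. i \<notin> S \<longrightarrow> f i = 0) \<and> (\<forall>i\<in>S. f i \<le> 3) \<and>
      card {i\<in>S. odd (f i)} = p \<and> card {i\<in>S. 2 \<le> f i} = m}"

definition MM :: "nat \<Rightarrow> nat \<Rightarrow> nat \<Rightarrow> nat \<Rightarrow> nat multiset" where
  "MM N p m a = replicate_mset a 3 + replicate_mset (m - a) 2 + replicate_mset (p - a) 1
      + replicate_mset (N + a - m - p) 0"

lemma HH_slice_valid:
  assumes S: "finite S" and a: "a \<le> m" "a \<le> p" "m + p \<le> card S + a"
  shows "{f\<in>HH S p m. card {i\<in>S. f i = 3} = a} = GG S (MM (card S) p m a)"
proof (intro set_eqI iffI)
  fix f assume f: "f \<in> {f\<in>HH S p m. card {i\<in>S. f i = 3} = a}"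
  hence v: "\<forall>i\<in>S. f i \<le> 3" and sup: "\<forall>i. i \<notin> S \<longrightarrow> f i = 0" by (auto simp: HH_def)
  note c = counts4[OF S v]
  have big: "card {i\<in>S. f i = x} = 0" if "x > 3" for x
    using v that S by (subst card_0_eq) auto
  show "f \<in> GG S (MM (card S) p m a)"
    unfolding GG_count[OF S]
  proof (intro conjI)
    show "\<forall>x. card {i\<in>S. f i = x} = count (MM (card S) p m a) x"
    proof
      fix x
      show "card {i\<in>S. f i = x} = count (MM (card S) p m a) x"
        using f c big[of x] by (auto simp: HH_def MM_def)
    qed
  qed (use sup in auto)
next
  fix f assume f: "f \<in> GG S (MM (card S) p m a)"
  hence sup: "\<forall>i. i \<notin> S \<longrightarrow> f i = 0" and cnt: "\<And>x. card {i\<in>S. f i = x} = count (MM (card S) p m a) x"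
    unfolding GG_count[OF S] by auto
  have v: "\<forall>i\<in>S. f i \<le> 3"
  proof
    fix i assume i: "i \<in> S"
    show "f i \<le> 3"
    proof (rule ccontr)
      assume "\<not> f i \<le> 3"
      hence "count (MM (card S) p m a) (f i) = 0" by (simp add: MM_def)
      hence "card {j\<in>S. f j = f i} = 0" using cnt by simp
      moreover have "finite {j\<in>S. f j = f i}" using S by simp
      ultimately show False using i by auto
    qed
  qed
  note c = counts4[OF S v]
  show "f \<in> {f\<in>HH S p m. card {i\<in>S. f i = 3} = a}"
    using c cnt[of 1] cnt[of 2] cnt[of 3] sup v a by (auto simp: HH_def MM_def)
qed

lemma HH_slice_invalid:
  assumes S: "finite S" and a: "\<not> (a \<le> p \<and> m + p \<le> card S + a)"
  shows "{f\<in>HH S p m. card {i\<in>S. f i = 3} = a} = {}"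
proof (rule ccontr)
  assume "{f\<in>HH S p m. card {i\<in>S. f i = 3} = a} \<noteq> {}"
  then obtain f where f: "f \<in> HH S p m" "card {i\<in>S. f i = 3} = a" by auto
  hence v: "\<forall>i\<in>S. f i \<le> 3" by (auto simp: HH_def)
  note c = counts4[OF S v]
  show False using c f a by (auto simp: HH_def)
qed

lemma pairs_HH:
  fixes t :: "nat \<Rightarrow> complex"
  assumes S: "finite S"
  shows "(\<Sum>A\<in>{A. A \<subseteq> S \<and> card A = p}. \<Sum>B\<in>{B. B \<subseteq> S \<and> card B = m}. (\<Prod>i\<in>A. t i) * (\<Prod>i\<in>B. t i ^ 2))
       = (\<Sum>f\<in>HH S p m. \<Prod>i\<in>S. t i ^ f i)"
proof -
  define KA where "KA = {A. A \<subseteq> S \<and> card A = p}"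
  define KB where "KB = {B. B \<subseteq> S \<and> card B = m}"
  define \<phi> where "\<phi> = (\<lambda>(A, B) (i::nat). (if i \<in> A then 1 else 0) + (if i \<in> B then 2 else (0::nat)))"
  define \<psi> where "\<psi> = (\<lambda>f::nat\<Rightarrow>nat. ({i\<in>S. odd (f i)}, {i\<in>S. 2 \<le> f i}))"
  have setA: "{i\<in>S. odd (\<phi> (A, B) i)} = A" and setB: "{i\<in>S. 2 \<le> \<phi> (A, B) i} = B"
    if "A \<subseteq> S" "B \<subseteq> S" for A B
    using that by (auto simp: \<phi>_def)
  have bij: "bij_betw \<phi> (KA \<times> KB) (HH S p m)"
  proof (rule bij_betwI[where g = \<psi>])
    show "\<phi> \<in> KA \<times> KB \<rightarrow> HH S p m"
    proof
      fix x assume x: "x \<in> KA \<times> KB"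
      then obtain A B where xx: "x = (A, B)" and A: "A \<subseteq> S" "card A = p" and B: "B \<subseteq> S" "card B = m"
        by (auto simp: KA_def KB_def)
      show "\<phi> x \<in> HH S p m"
        unfolding HH_def xx using setA[OF A(1) B(1)] setB[OF A(1) B(1)] A B
        by (auto simp: \<phi>_def)
    qed
    show "\<psi> \<in> HH S p m \<rightarrow> KA \<times> KB"
      by (auto simp: \<psi>_def HH_def KA_def KB_def)
    show "\<psi> (\<phi> x) = x" if xin: "x \<in> KA \<times> KB" for x
    proof -
      obtain A B where "x = (A, B)" "A \<subseteq> S" "B \<subseteq> S" using xin by (auto simp: KA_def KB_def)
      thus ?thesis using setA setB by (simp add: \<psi>_def)
    qed
    show "\<phi> (\<psi> f) = f" if f: "f \<in> HH S p m" for f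
    proof
      fix i
      show "\<phi> (\<psi> f) i = f i"
      proof (cases "i \<in> S")
        case True
        hence "f i \<le> 3" using f by (auto simp: HH_def)
        hence "f i = 0 \<or> f i = 1 \<or> f i = 2 \<or> f i = 3" by linarith
        thus ?thesis using True by (auto simp: \<phi>_def \<psi>_def)
      next
        case False thus ?thesis using f by (auto simp: \<phi>_def \<psi>_def HH_def)
      qed
    qed
  qed
  have val: "(\<Prod>i\<in>A. t i) * (\<Prod>i\<in>B. t i ^ 2) = (\<Prod>i\<in>S. t i ^ \<phi> (A, B) i)"
    if "A \<subseteq> S" "B \<subseteq> S" for A B
  proof -
    have "(\<Prod>i\<in>S. t i ^ \<phi> (A, B) i) = (\<Prod>i\<in>S. (if i \<in> A then t i else 1) * (if i \<in> B then t i ^ 2 else 1))"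
      by (intro prod.cong refl) (simp add: \<phi>_def power_add)
    also have "\<dots> = (\<Prod>i\<in>S. if i \<in> A then t i else 1) * (\<Prod>i\<in>S. if i \<in> B then t i ^ 2 else 1)"
      by (rule prod.distrib)
    also have "\<dots> = (\<Prod>i\<in>S \<inter> A. t i) * (\<Prod>i\<in>S \<inter> B. t i ^ 2)"
      using S by (simp add: prod.inter_restrict)
    finally show ?thesis using that by (simp add: Int_absorb1)
  qed
  have "(\<Sum>A\<in>KA. \<Sum>B\<in>KB. (\<Prod>i\<in>A. t i) * (\<Prod>i\<in>B. t i ^ 2))
      = (\<Sum>x\<in>KA \<times> KB. (\<lambda>f. \<Prod>i\<in>S. t i ^ f i) (\<phi> x))"
    unfolding sum.cartesian_product
    by (intro sum.cong refl) (auto simp: KA_def KB_def val)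
  also have "\<dots> = (\<Sum>f\<in>HH S p m. \<Prod>i\<in>S. t i ^ f i)"
    by (rule sum.reindex_bij_betw[OF bij])
  finally show ?thesis by (simp add: KA_def KB_def)
qed

lemma shift_GG:
  fixes t :: "nat \<Rightarrow> complex"
  assumes S: "finite S"
  shows "wsum S t (image_mset Suc M0) = (\<Prod>i\<in>S. t i) * wsum S t M0"
proof -
  define \<phi> where "\<phi> = (\<lambda>g (i::nat). if i \<in> S then Suc (g i) else 0)"
  have bij: "bij_betw \<phi> (GG S M0) (GG S (image_mset Suc M0))"
  proof (rule bij_betwI[where g = "\<lambda>f i. f i - 1"])
    show "\<phi> \<in> GG S M0 \<rightarrow> GG S (image_mset Suc M0)"
    proof
      fix g assume g: "g \<in> GG S M0"
      have "image_mset (\<phi> g) (mset_set S) = image_mset (Suc \<circ> g) (mset_set S)"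
        using S by (intro image_mset_cong) (auto simp: \<phi>_def)
      also have "\<dots> = image_mset Suc M0" using g by (simp add: GG_def image_mset.compositionality[symmetric])
      finally show "\<phi> g \<in> GG S (image_mset Suc M0)" by (simp add: GG_def \<phi>_def)
    qed
    show "(\<lambda>f i. f i - 1) \<in> GG S (image_mset Suc M0) \<rightarrow> GG S M0"
    proof
      fix f assume f: "f \<in> GG S (image_mset Suc M0)"
      have "image_mset (\<lambda>i. f i - 1) (mset_set S) = image_mset (\<lambda>x. x - 1) (image_mset f (mset_set S))"
        by (simp add: image_mset.compositionality o_def)
      also have "\<dots> = image_mset (\<lambda>x. x - 1) (image_mset Suc M0)" using f by (simp add: GG_def)
      also have "\<dots> = M0" by (simp add: image_mset.compositionality o_def)
      finally show "(\<lambda>i. f i - 1) \<in> GG S M0" using f by (simp add: GG_def)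
    qed
    show "(\<lambda>i. \<phi> g i - 1) = g" if "g \<in> GG S M0" for g
      using that by (auto simp: \<phi>_def GG_def)
    show "\<phi> (\<lambda>i. f i - 1) = f" if f: "f \<in> GG S (image_mset Suc M0)" for f
    proof
      fix i
      show "\<phi> (\<lambda>i. f i - 1) i = f i"
      proof (cases "i \<in> S")
        case True
        have eqf: "image_mset f (mset_set S) = image_mset Suc M0" using f by (simp add: GG_def)
        have "f i \<in># image_mset f (mset_set S)" using S True by simp
        hence "f i \<in># image_mset Suc M0" by (simp only: eqf)
        then obtain x where "f i = Suc x" by auto
        hence "f i > 0" by simp
        thus ?thesis using True by (simp add: \<phi>_def)
      next
        case False thus ?thesis using f by (simp add: \<phi>_def GG_def)
      qed
    qed
  qed
  have "wsum S t (image_mset Suc M0) = (\<Sum>g\<in>GG S M0. \<Prod>i\<in>S. t i ^ \<phi> g i)"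
    unfolding wsum_def by (rule sum.reindex_bij_betw[OF bij, symmetric])
  also have "\<dots> = (\<Sum>g\<in>GG S M0. (\<Prod>i\<in>S. t i) * (\<Prod>i\<in>S. t i ^ g i))"
    by (intro sum.cong refl) (simp add: \<phi>_def prod.distrib[symmetric])
  also have "\<dots> = (\<Prod>i\<in>S. t i) * wsum S t M0"
    by (simp add: wsum_def sum_distrib_left)
  finally show ?thesis .
qed

lemma calY_wsum:
  assumes "0 \<notin> set s"
  shows "calY n s = wsum {1..n-1} (tt n) (mset s + replicate_mset (n - 1 - length s) 0)"
proof -
  have "calY n s = (\<Sum>\<sigma>\<in>permutations_of_multiset (mset s). \<Sum>I\<in>{I. I \<subseteq> {1..n-1} \<and> card I = length \<sigma>}.
            \<Prod>k<length \<sigma>. tt n (sorted_list_of_set I ! k) ^ (\<sigma> ! k))"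
    unfolding calY_def frakZ_def tt_def by (simp add: power_inverse)
  also have "\<dots> = wsum {1..n-1} (tt n) (mset s + replicate_mset (card {1..n-1} - length s) 0)"
    by (rule link) (use assms in auto)
  finally show ?thesis by simp
qed

lemma finite_HH:
  assumes "finite S" shows "finite (HH S p m)"
proof (rule finite_subset)
  show "HH S p m \<subseteq> {f. \<forall>x. (x \<in> S \<longrightarrow> f x \<in> {0..3}) \<and> (x \<notin> S \<longrightarrow> f x = 0)}"
    by (auto simp: HH_def)
  show "finite {f. \<forall>x. (x \<in> S \<longrightarrow> f x \<in> {0..3::nat}) \<and> (x \<notin> S \<longrightarrow> f x = 0)}"
    by (rule finite_set_of_finite_funs) (use assms in auto)
qed

lemma main_nat:
  fixes N m l :: nat
  assumes lm: "l \<le> m" and mN: "m \<le> N"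
  defines "n \<equiv> Suc N" and "p \<equiv> N - l"
  shows "calY n (replicate (m - l) 2 @ replicate l 1)
        + of_nat n * (\<Sum>a\<in>{m-l+1..p}. if a \<le> m then calY n (replicate a 3 @ replicate (m - a) 2 @ replicate (p - a) 1) else 0)
       = of_nat (n choose l) * esym {1..n-1} (\<lambda>i. tt n i ^ 2) m"
proof -
  define S where "S = {1..N}"
  define t where "t = tt n"
  have S: "finite S" and cS: "card S = N" by (auto simp: S_def)
  have nS: "{1..n-1} = S" by (simp add: S_def n_def)
  define w where "w = (\<lambda>a. wsum S t (MM N p m a))"
  define g where "g = (\<lambda>f. \<Prod>i\<in>S. t i ^ f i)"
  have "esym S t p * esym S (\<lambda>i. t i ^ 2) m = (\<Sum>f\<in>HH S p m. g f)"
    unfolding esym_def sum_product g_def by (rule pairs_HH[OF S])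
  also have "\<dots> = (\<Sum>a\<in>{0..m}. \<Sum>f\<in>{f\<in>HH S p m. card {i\<in>S. f i = 3} = a}. g f)"
  proof (rule sum.group[symmetric])
    show "finite (HH S p m)" by (rule finite_HH[OF S])
    show "(\<lambda>f. card {i\<in>S. f i = 3}) ` HH S p m \<subseteq> {0..m}"
    proof
      fix a assume "a \<in> (\<lambda>f. card {i\<in>S. f i = 3}) ` HH S p m"
      then obtain f where f: "f \<in> HH S p m" "a = card {i\<in>S. f i = 3}" by auto
      have "card {i\<in>S. f i = 3} \<le> card {i\<in>S. 2 \<le> f i}"
        by (rule card_mono) (use S in auto)
      thus "a \<in> {0..m}" using f by (auto simp: HH_def)
    qed
  qed simp
  also have "\<dots> = (\<Sum>a\<in>{0..m}. if a \<in> {m-l..p} then w a else 0)"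
  proof (rule sum.cong[OF refl])
    fix a assume a: "a \<in> {0..m}"
    show "(\<Sum>f\<in>{f\<in>HH S p m. card {i\<in>S. f i = 3} = a}. g f) = (if a \<in> {m-l..p} then w a else 0)"
    proof (cases "a \<in> {m-l..p}")
      case True
      hence "a \<le> m" "a \<le> p" "m + p \<le> card S + a" using a lm mN by (auto simp: cS p_def)
      from HH_slice_valid[OF S this] True show ?thesis by (simp add: w_def wsum_def g_def cS)
    next
      case False
      hence "\<not> (a \<le> p \<and> m + p \<le> card S + a)" using a lm mN by (auto simp: cS p_def)
      note e = HH_slice_invalid[OF S this]
      show ?thesis unfolding e using False by auto
    qed
  qed
  also have "\<dots> = (\<Sum>a\<in>{0..m} \<inter> {m-l..p}. w a)"
    by (rule sum.inter_restrict[symmetric]) simp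
  also have "{0..m} \<inter> {m-l..p} = insert (m - l) {m-l+1..min m p}"
    using lm mN by (auto simp: p_def)
  also have "(\<Sum>a\<in>insert (m - l) {m-l+1..min m p}. w a) = w (m - l) + (\<Sum>a\<in>{m-l+1..min m p}. w a)"
    by (rule sum.insert) auto
  also have "(\<Sum>a\<in>{m-l+1..min m p}. w a) = (\<Sum>a\<in>{m-l+1..p}. if a \<le> m then w a else 0)"
  proof -
    have "(\<Sum>a\<in>{m-l+1..p}. if a \<in> {..m} then w a else 0) = (\<Sum>a\<in>{m-l+1..p} \<inter> {..m}. w a)"
      by (rule sum.inter_restrict[symmetric]) simp
    hence "(\<Sum>a\<in>{m-l+1..p}. if a \<le> m then w a else 0) = (\<Sum>a\<in>{m-l+1..p} \<inter> {..m}. w a)"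
      by simp
    also have "{m-l+1..p} \<inter> {..m} = {m-l+1..min m p}" by auto
    finally show ?thesis by simp
  qed
  finally have X: "esym S t p * esym S (\<lambda>i. t i ^ 2) m
      = w (m - l) + (\<Sum>a\<in>{m-l+1..p}. if a \<le> m then w a else 0)" .
  have w0: "w (m - l) = (1 / of_nat n) * calY n (replicate (m - l) 2 @ replicate l 1)"
  proof -
    define M0 where "M0 = mset (replicate (m - l) 2 @ replicate l (1::nat)) + replicate_mset (N - m) 0"
    have "MM N p m (m - l) = image_mset Suc M0"
      using lm mN by (simp add: MM_def M0_def p_def numeral_3_eq_3 numeral_2_eq_2)
    hence "w (m - l) = (\<Prod>i\<in>S. t i) * wsum S t M0"
      by (simp add: w_def shift_GG[OF S])
    moreover have "(\<Prod>i\<in>S. t i) = 1 / of_nat n"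
      using prod_tt[of n] nS by (simp add: t_def n_def)
    moreover have "calY n (replicate (m - l) 2 @ replicate l 1) = wsum S t M0"
      using calY_wsum[of "replicate (m - l) 2 @ replicate l 1" n] nS lm
      by (simp add: M0_def t_def n_def)
    ultimately show ?thesis by simp
  qed
  have wa: "w a = calY n (replicate a 3 @ replicate (m - a) 2 @ replicate (p - a) 1)"
    if "a \<in> {m-l+1..p}" "a \<le> m" for a
  proof -
    have "calY n (replicate a 3 @ replicate (m - a) 2 @ replicate (p - a) 1)
        = wsum S t (mset (replicate a 3 @ replicate (m - a) 2 @ replicate (p - a) (1::nat))
                    + replicate_mset (n - 1 - length (replicate a 3 @ replicate (m - a) 2 @ replicate (p - a) (1::nat))) 0)"
      using calY_wsum[of "replicate a 3 @ replicate (m - a) 2 @ replicate (p - a) 1" n] nS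
      by (simp add: t_def)
    also have "mset (replicate a 3 @ replicate (m - a) 2 @ replicate (p - a) (1::nat))
                    + replicate_mset (n - 1 - length (replicate a 3 @ replicate (m - a) 2 @ replicate (p - a) (1::nat))) 0
             = MM N p m a"
    proof -
      have len: "n - 1 - length (replicate a 3 @ replicate (m - a) 2 @ replicate (p - a) (1::nat)) = N + a - m - p"
        using that lm mN by (simp add: n_def p_def; arith)
      show ?thesis unfolding len by (simp add: MM_def add_ac)
    qed
    finally show ?thesis by (simp add: w_def)
  qed
  have n0: "of_nat n \<noteq> (0::complex)" unfolding n_def by (metis of_nat_eq_0_iff nat.distinct(1))
  have "of_nat n * (esym S t p * esym S (\<lambda>i. t i ^ 2) m) = of_nat (n choose l) * esym S (\<lambda>i. t i ^ 2) m"
  proof -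
    have "of_nat n * esym S t p = of_nat (n choose (p + 1))"
      using esym_tt[of n p] nS by (simp add: t_def n_def)
    also have "n choose (p + 1) = n choose l"
      using binomial_symmetric[of l n] lm mN by (simp add: n_def p_def Suc_diff_le)
    finally show ?thesis by (simp add: mult.assoc[symmetric])
  qed
  also have "of_nat n * (esym S t p * esym S (\<lambda>i. t i ^ 2) m)
      = calY n (replicate (m - l) 2 @ replicate l 1)
        + of_nat n * (\<Sum>a\<in>{m-l+1..p}. if a \<le> m then calY n (replicate a 3 @ replicate (m - a) 2 @ replicate (p - a) 1) else 0)"
  proof -
    have sc: "(\<Sum>a\<in>{m-l+1..p}. if a \<le> m then w a else 0)
      = (\<Sum>a\<in>{m-l+1..p}. if a \<le> m then calY n (replicate a 3 @ replicate (m - a) 2 @ replicate (p - a) 1) else 0)"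
      by (rule sum.cong[OF refl]) (simp add: wa)
    show ?thesis unfolding X w0 sc using n0 by (simp add: distrib_left)
  qed
  finally show ?thesis using nS by (simp add: t_def)
qed

lemma e2_closed:
  fixes N m :: nat
  shows "of_nat (Suc N) * (of_nat m + 1) * esym {1..Suc N - 1} (\<lambda>i. tt (Suc N) i ^ 2) m
       = of_nat (N choose m) + (-1) ^ m * of_nat (N choose (2 * m + 1))"
proof -
  define e where "e = esym {1..Suc N - 1} (\<lambda>i. tt (Suc N) i ^ 2) m"
  define n :: complex where "n = of_nat (Suc N)"
  have n0: "n \<noteq> 0" unfolding n_def by (metis of_nat_eq_0_iff nat.distinct(1))
  have E: "n ^ 2 * e = of_nat (Suc N choose (m + 1)) + 2 * (-1) ^ m * of_nat (Suc N choose (2 * m + 2))"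
    using esym_tt2[of "Suc N" m] by (simp add: e_def n_def)
  have B1: "n * of_nat (N choose m) = of_nat (Suc N choose (m + 1)) * (of_nat m + 1)"
    using Suc_times_binomial_eq[of N m] unfolding n_def
    by (metis (mono_tags, lifting) Suc_eq_plus1 of_nat_Suc of_nat_mult add.commute)
  have B2n: "Suc N * (N choose (2 * m + 1)) = (Suc N choose (2 * m + 2)) * (2 * m + 2)"
    using Suc_times_binomial_eq[of N "2 * m + 1"] by simp
  have B2: "n * of_nat (N choose (2 * m + 1)) = of_nat (Suc N choose (2 * m + 2)) * (2 * (of_nat m + 1))"
  proof -
    have c: "(of_nat (Suc N) * of_nat (N choose (2 * m + 1)) :: complex) = of_nat (Suc N choose (2 * m + 2)) * of_nat (2 * m + 2)"
      using arg_cong[OF B2n, of "of_nat :: nat \<Rightarrow> complex"] by (simp only: of_nat_mult)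
    have d: "(of_nat (2 * m + 2) :: complex) = 2 * (of_nat m + 1)" by simp
    show ?thesis unfolding n_def c d ..
  qed
  have "n * (n * (of_nat m + 1) * e) = (of_nat m + 1) * (n ^ 2 * e)"
    by (simp add: power2_eq_square algebra_simps)
  also have "\<dots> = of_nat (Suc N choose (m + 1)) * (of_nat m + 1)
                  + (-1) ^ m * (of_nat (Suc N choose (2 * m + 2)) * (2 * (of_nat m + 1)))"
    unfolding E by (simp add: algebra_simps)
  also have "\<dots> = n * (of_nat (N choose m) + (-1) ^ m * of_nat (N choose (2 * m + 1)))"
    unfolding B1[symmetric] B2[symmetric] by (simp add: algebra_simps)
  finally show ?thesis using n0 by (simp add: e_def n_def)
qed

theorem theorem3:
  fixes n m l :: int
  assumes "n - 1 \<ge> m" and "m \<ge> l" and "l \<ge> 0"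
  shows "calY_blocks (nat n) [(2, m - l), (1, l)]
         + of_int n * (\<Sum>j=0..n-m-2.
              calY_blocks (nat n) [(3, m - l + 1 + j), (2, l - 1 - j), (1, n - m - 2 - j)])
       = 1 / (of_int n * (of_int m + 1))
         * (of_nat (nat (n - 1) choose nat m) + (-1) ^ nat m * of_nat (nat (n - 1) choose nat (2 * m + 1)))
         * of_nat (nat n choose nat l)"
proof -
  define N where "N = nat (n - 1)"
  define m' where "m' = nat m"
  define l' where "l' = nat l"
  define p where "p = N - l'"
  have nN: "n = int N + 1" and mm: "m = int m'" and ll: "l = int l'"
    using assms by (auto simp: N_def m'_def l'_def)
  have lm: "l' \<le> m'" and mN: "m' \<le> N" using assms by (auto simp: N_def m'_def l'_def)
  have natn: "nat n = Suc N" using nN by simp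
  have first: "calY_blocks (nat n) [(2, m - l), (1, l)] = calY (Suc N) (replicate (m' - l') 2 @ replicate l' 1)"
  proof -
    have "nat (m - l) = m' - l'" using lm by (simp add: mm ll)
    moreover have "\<not> m - l < 0" "\<not> l < 0" using assms by auto
    ultimately show ?thesis unfolding calY_blocks_def natn by (simp add: l'_def)
  qed
  define h where "h = (\<lambda>a::nat. int a - (m - l + 1))"
  have bij: "bij_betw h {m'-l'+1..p} {0..n-m-2}"
  proof (rule bij_betw_byWitness[where f' = "\<lambda>j. nat (j + m - l + 1)"])
    show "\<forall>a\<in>{m'-l'+1..p}. nat (h a + m - l + 1) = a" by (auto simp: h_def)
    show "\<forall>j\<in>{0..n-m-2}. h (nat (j + m - l + 1)) = j" using assms by (auto simp: h_def)
    show "h ` {m'-l'+1..p} \<subseteq> {0..n-m-2}" using lm mN by (auto simp: h_def p_def nN mm ll)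
    show "(\<lambda>j. nat (j + m - l + 1)) ` {0..n-m-2} \<subseteq> {m'-l'+1..p}"
      using lm mN assms by (auto simp: p_def nN mm ll)
  qed
  have sum_eq: "(\<Sum>j=0..n-m-2. calY_blocks (nat n) [(3, m - l + 1 + j), (2, l - 1 - j), (1, n - m - 2 - j)])
      = (\<Sum>a\<in>{m'-l'+1..p}. if a \<le> m' then calY (Suc N) (replicate a 3 @ replicate (m' - a) 2 @ replicate (p - a) 1) else 0)"
  proof -
    have "(\<Sum>j=0..n-m-2. calY_blocks (nat n) [(3, m - l + 1 + j), (2, l - 1 - j), (1, n - m - 2 - j)])
       = (\<Sum>a\<in>{m'-l'+1..p}. calY_blocks (nat n) [(3, m - l + 1 + h a), (2, l - 1 - h a), (1, n - m - 2 - h a)])"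
      by (rule sum.reindex_bij_betw[OF bij, symmetric])
    also have "\<dots> = (\<Sum>a\<in>{m'-l'+1..p}. if a \<le> m' then calY (Suc N) (replicate a 3 @ replicate (m' - a) 2 @ replicate (p - a) 1) else 0)"
    proof (rule sum.cong[OF refl])
      fix a assume a: "a \<in> {m'-l'+1..p}"
      have e1: "m - l + 1 + h a = int a" by (simp add: h_def)
      have e2: "l - 1 - h a = int m' - int a" by (simp add: h_def mm ll)
      have e3: "n - m - 2 - h a = int (p - a)" using a lm mN by (auto simp: h_def nN mm ll p_def)
      show "calY_blocks (nat n) [(3, m - l + 1 + h a), (2, l - 1 - h a), (1, n - m - 2 - h a)]
          = (if a \<le> m' then calY (Suc N) (replicate a 3 @ replicate (m' - a) 2 @ replicate (p - a) 1) else 0)"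
        unfolding e1 e2 e3 calY_blocks_def natn by (auto simp: nat_diff_distrib)
    qed
    finally show ?thesis .
  qed
  have main: "calY (Suc N) (replicate (m' - l') 2 @ replicate l' 1)
        + of_nat (Suc N) * (\<Sum>a\<in>{m'-l'+1..p}. if a \<le> m' then calY (Suc N) (replicate a 3 @ replicate (m' - a) 2 @ replicate (p - a) 1) else 0)
       = of_nat (Suc N choose l') * esym {1..Suc N-1} (\<lambda>i. tt (Suc N) i ^ 2) m'"
    unfolding p_def by (rule main_nat[OF lm mN])
  have cl: "esym {1..Suc N-1} (\<lambda>i. tt (Suc N) i ^ 2) m'
      = 1 / (of_nat (Suc N) * (of_nat m' + 1)) * (of_nat (N choose m') + (-1) ^ m' * of_nat (N choose (2 * m' + 1)))"
  proof -
    have "of_nat (Suc N) * (of_nat m' + 1) \<noteq> (0::complex)"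
      by (metis add_eq_0_iff_both_eq_0 mult_eq_0_iff of_nat_Suc of_nat_eq_0_iff one_neq_zero nat.distinct(1) add.commute)
    thus ?thesis using e2_closed[of N m'] by (simp add: field_simps)
  qed
  have rhs: "1 / (of_int n * (of_int m + 1))
         * (of_nat (nat (n - 1) choose nat m) + (-1) ^ nat m * of_nat (nat (n - 1) choose nat (2 * m + 1)))
         * of_nat (nat n choose nat l)
       = of_nat (Suc N choose l') * (1 / (of_nat (Suc N) * (of_nat m' + 1)) * (of_nat (N choose m') + (-1) ^ m' * of_nat (N choose (2 * m' + 1))) :: complex)"
  proof -
    have a1: "nat (n - 1) = N" by (simp add: N_def)
    have a4: "nat (2 * m + 1) = 2 * m' + 1" by (simp add: mm nat_add_distrib nat_mult_distrib)
    have a5: "(of_int n :: complex) = of_nat (Suc N)" using nN by simp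
    have a6: "(of_int m :: complex) = of_nat m'" using mm by simp
    show ?thesis unfolding a1 a4 a5 a6 natn m'_def[symmetric] l'_def[symmetric] by (simp add: mult_ac)
  qed
  have a5: "(of_int n :: complex) = of_nat (Suc N)" using nN by simp
  note main2 = main[unfolded cl]
  show ?thesis
    unfolding first sum_eq rhs unfolding a5 p_def by (rule main2[unfolded p_def])
qed

end
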